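(* For every integer $n\ge 1$, the number of ordered set partitions of $[n]$ into exactly $n-1$ blocks that avoid the pattern $123$ is $$\operatorname{op}_{n,n-1}(123) = \frac{3(n-1)^2\binom{2n-2}{n-1}}{n(n+1)}.$$
   Context: An ordered set partition of $[n]$ into $k$ blocks is a sequence $B_1/B_2/\cdots/B_k$ of nonempty, pairwise disjoint subsets of $[n]$ whose union is $[n]$; the order of the blocks matters, but not the order of elements within a block. For a permutation $\rho=\rho_1\cdots\rho_m\in\mathcal{S}_m$, an ordered partition $B_1/\cdots/B_k$ contains $\rho$ if there are block indices $i_1<i_2<\cdots<i_m$ and elements $b_j\in B_{i_j}$ such that $b_1\cdots b_m$ is order-isomorphic to $\rho$ (i.e. $b_a<b_c$ iff $\rho_a<\rho_c$); otherwise it avoids $\rho$. $\operatorname{op}_{n,k}(\rho)$ denotes the number of ordered partitions of $[n]$ into $k$ blocks that avoid $\rho$ (so it is $0$ when $k=0<n$). *)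

theory Defs
  imports Complex_Main
begin

definition ordered_set_partitions :: "nat \<Rightarrow> nat \<Rightarrow> nat set list set" where
  "ordered_set_partitions n k =
     {Bs. length Bs = k \<and> (\<forall>i<k. Bs ! i \<noteq> {}) \<and>
          (\<forall>i<k. \<forall>j<k. i \<noteq> j \<longrightarrow> Bs ! i \<inter> Bs ! j = {}) \<and>
          \<Union>(set Bs) = {1..n}}"

text \<open>A permutation rho in S_m, given as the list rho_1 ... rho_m (0-indexed here).\<close>
definition op_contains :: "nat set list \<Rightarrow> nat list \<Rightarrow> bool" where
  "op_contains Bs \<rho> \<longleftrightarrow>
     (\<exists>idx b :: nat \<Rightarrow> nat.
        strict_mono_on {0..<length \<rho>} idx \<and>
        (\<forall>j<length \<rho>. idx j < length Bs \<and> b j \<in> Bs ! idx j) \<and>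
        (\<forall>a<length \<rho>. \<forall>c<length \<rho>. b a < b c \<longleftrightarrow> \<rho> ! a < \<rho> ! c))"

definition op_count :: "nat \<Rightarrow> nat \<Rightarrow> nat list \<Rightarrow> nat" where
  "op_count n k \<rho> = card {Bs \<in> ordered_set_partitions n k. \<not> op_contains Bs \<rho>}"

end

theory Submission
  imports Defs
begin

definition avoid :: "nat set list \<Rightarrow> bool" where
  "avoid Bs \<longleftrightarrow> (\<forall>i j l x y z. i<j \<longrightarrow> j<l \<longrightarrow> l<length Bs \<longrightarrow> x\<in>Bs!i \<longrightarrow> y\<in>Bs!j \<longrightarrow> z\<in>Bs!l \<longrightarrow> \<not>(x<y \<and> y<z))"

definition dec :: "nat \<Rightarrow> nat set list \<Rightarrow> bool" where
  "dec t Bs \<longleftrightarrow> t \<le> length Bs \<and> (\<forall>i j x y. i<j \<longrightarrow> j<t \<longrightarrow> x\<in>Bs!i \<longrightarrow> y\<in>Bs!j \<longrightarrow> \<not> x<y)"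

definition ins1 :: "nat \<Rightarrow> nat \<Rightarrow> nat set list \<Rightarrow> nat set list" where
  "ins1 N s Bs = take s Bs @ {N} # drop s Bs"

definition ins2 :: "nat \<Rightarrow> nat \<Rightarrow> nat set list \<Rightarrow> nat set list" where
  "ins2 N p Bs = Bs[p := insert N (Bs!p)]"

lemma length_ins1[simp]: "s \<le> length Bs \<Longrightarrow> length (ins1 N s Bs) = Suc (length Bs)"
  by (simp add: ins1_def)

lemma nth_ins1: "s \<le> length Bs \<Longrightarrow> ins1 N s Bs ! i = (if i < s then Bs!i else if i = s then {N} else Bs!(i-1))"
  by (auto simp: ins1_def nth_append min_def)

lemma length_ins2[simp]: "length (ins2 N p Bs) = length Bs"
  by (simp add: ins2_def)

lemma nth_ins2: "p < length Bs \<Longrightarrow> ins2 N p Bs ! i = (if i = p then insert N (Bs!p) else Bs!i)"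
  by (auto simp: ins2_def)

lemma osp_iff: "Bs \<in> ordered_set_partitions n k \<longleftrightarrow>
   length Bs = k \<and> (\<forall>i<k. Bs ! i \<noteq> {}) \<and>
   (\<forall>i<k. \<forall>j<k. i \<noteq> j \<longrightarrow> Bs ! i \<inter> Bs ! j = {}) \<and>
   (\<forall>x. (\<exists>i<k. x \<in> Bs!i) \<longleftrightarrow> x \<in> {1..n})"
proof -
  have "\<Union>(set Bs) = {x. \<exists>i<length Bs. x \<in> Bs!i}" by (auto simp: in_set_conv_nth) (metis nth_mem)
  then show ?thesis unfolding ordered_set_partitions_def by auto
qed

lemma osp_elem: "Bs \<in> ordered_set_partitions n k \<Longrightarrow> i < k \<Longrightarrow> x \<in> Bs!i \<Longrightarrow> 1 \<le> x \<and> x \<le> n"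
  unfolding osp_iff by auto

lemma osp_ins1:
  assumes B: "Bs \<in> ordered_set_partitions m c" and s: "s \<le> c"
  shows "ins1 (Suc m) s Bs \<in> ordered_set_partitions (Suc m) (Suc c)"
proof -
  have L: "length Bs = c" using B by (simp add: osp_iff)
  have nN: "\<And>k. k < c \<Longrightarrow> Suc m \<notin> Bs!k" using osp_elem[OF B] by fastforce
  have ne: "\<And>k. k<c \<Longrightarrow> Bs!k \<noteq> {}" using B by (simp add: osp_iff)
  have dj: "\<And>i j. i<c \<Longrightarrow> j<c \<Longrightarrow> i\<noteq>j \<Longrightarrow> Bs!i \<inter> Bs!j = {}" using B by (simp add: osp_iff)
  have un: "\<And>x. (\<exists>i<c. x \<in> Bs!i) \<longleftrightarrow> x \<in> {1..m}" using B by (simp add: osp_iff)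
  show ?thesis unfolding osp_iff
  proof (intro conjI allI impI)
    show "length (ins1 (Suc m) s Bs) = Suc c" using L s by simp
  next
    fix i assume "i < Suc c" then show "ins1 (Suc m) s Bs ! i \<noteq> {}"
      using ne s L by (auto simp: nth_ins1)
  next
    fix i j assume "i < Suc c" "j < Suc c" "i \<noteq> j"
    then show "ins1 (Suc m) s Bs ! i \<inter> ins1 (Suc m) s Bs ! j = {}"
      using dj[of i j] dj[of i "j-1"] dj[of "i-1" j] dj[of "i-1" "j-1"] nN[of i] nN[of j] nN[of "i-1"] nN[of "j-1"] s L
      by (auto simp: nth_ins1)
  next
    fix x
    show "(\<exists>i<Suc c. x \<in> ins1 (Suc m) s Bs ! i) = (x \<in> {1..Suc m})"
    proof
      assume "\<exists>i<Suc c. x \<in> ins1 (Suc m) s Bs ! i"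
      then obtain i where i: "i < Suc c" "x \<in> ins1 (Suc m) s Bs ! i" by blast
      show "x \<in> {1..Suc m}"
      proof (cases "i < s")
        case True then show ?thesis using i un[of x] s L by (auto simp: nth_ins1)
      next
        case False
        show ?thesis
        proof (cases "i = s")
          case True then show ?thesis using i s L by (auto simp: nth_ins1)
        next
          case False then have "i - 1 < c" "x \<in> Bs!(i-1)" using i \<open>\<not> i<s\<close> s L by (auto simp: nth_ins1)
          then show ?thesis using un[of x] by auto
        qed
      qed
    next
      assume x: "x \<in> {1..Suc m}"
      show "\<exists>i<Suc c. x \<in> ins1 (Suc m) s Bs ! i"
      proof (cases "x = Suc m")
        case True then show ?thesis using s L by (intro exI[of _ s]) (auto simp: nth_ins1)
      next
        case False then obtain i where "i<c" "x \<in> Bs!i" using un[of x] x by auto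
        show ?thesis
        proof (cases "i < s")
          case True then show ?thesis using s L \<open>i<c\<close> \<open>x \<in> Bs!i\<close> by (intro exI[of _ i]) (auto simp: nth_ins1)
        next
          case False then show ?thesis using s L \<open>i<c\<close> \<open>x \<in> Bs!i\<close> by (intro exI[of _ "Suc i"]) (auto simp: nth_ins1)
        qed
      qed
    qed
  qed
qed

lemma osp_ins2:
  assumes B: "Bs \<in> ordered_set_partitions m c" and p: "p < c"
  shows "ins2 (Suc m) p Bs \<in> ordered_set_partitions (Suc m) c"
proof -
  have L: "length Bs = c" using B by (simp add: osp_iff)
  have nN: "\<And>k. k < c \<Longrightarrow> Suc m \<notin> Bs!k" using osp_elem[OF B] by fastforce
  have ne: "\<And>k. k<c \<Longrightarrow> Bs!k \<noteq> {}" using B by (simp add: osp_iff)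
  have dj: "\<And>i j. i<c \<Longrightarrow> j<c \<Longrightarrow> i\<noteq>j \<Longrightarrow> Bs!i \<inter> Bs!j = {}" using B by (simp add: osp_iff)
  have un: "\<And>x. (\<exists>i<c. x \<in> Bs!i) \<longleftrightarrow> x \<in> {1..m}" using B by (simp add: osp_iff)
  show ?thesis unfolding osp_iff
  proof (intro conjI allI impI)
    show "length (ins2 (Suc m) p Bs) = c" using L by simp
  next
    fix i assume "i < c" then show "ins2 (Suc m) p Bs ! i \<noteq> {}"
      using ne p L by (auto simp: nth_ins2)
  next
    fix i j assume "i < c" "j < c" "i \<noteq> j"
    then show "ins2 (Suc m) p Bs ! i \<inter> ins2 (Suc m) p Bs ! j = {}"
      using dj[of i j] nN[of i] nN[of j] p L
      by (auto simp: nth_ins2)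
  next
    fix x
    show "(\<exists>i<c. x \<in> ins2 (Suc m) p Bs ! i) = (x \<in> {1..Suc m})"
    proof
      assume "\<exists>i<c. x \<in> ins2 (Suc m) p Bs ! i"
      then obtain i where i: "i < c" "x \<in> ins2 (Suc m) p Bs ! i" by blast
      show "x \<in> {1..Suc m}"
        using i un[of x] p L by (cases "i = p") (auto simp: nth_ins2)
    next
      assume x: "x \<in> {1..Suc m}"
      show "\<exists>i<c. x \<in> ins2 (Suc m) p Bs ! i"
      proof (cases "x = Suc m")
        case True then show ?thesis using p L by (intro exI[of _ p]) (auto simp: nth_ins2)
      next
        case False then obtain i where "i<c" "x \<in> Bs!i" using un[of x] x by auto
        then show ?thesis using p L by (intro exI[of _ i]) (auto simp: nth_ins2)
      qed
    qed
  qed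
qed

definition del :: "nat \<Rightarrow> nat set list \<Rightarrow> nat set list" where
  "del s Cs = take s Cs @ drop (Suc s) Cs"

lemma length_del[simp]: "s < length Cs \<Longrightarrow> length (del s Cs) = length Cs - 1"
  by (simp add: del_def)

lemma nth_del: "s < length Cs \<Longrightarrow> del s Cs ! i = (if i < s then Cs!i else Cs!(Suc i))"
  by (auto simp: del_def nth_append min_def)

lemma del_ins1[simp]: "s \<le> length Bs \<Longrightarrow> del s (ins1 N s Bs) = Bs"
  by (simp add: del_def ins1_def)

lemma ins1_del: "s < length Cs \<Longrightarrow> Cs!s = {N} \<Longrightarrow> ins1 N s (del s Cs) = Cs"
  by (rule nth_equalityI) (auto simp: nth_ins1 nth_del)

lemma osp_del:
  assumes C: "Cs \<in> ordered_set_partitions (Suc m) (Suc c)" and s: "s < Suc c" and Cs: "Cs!s = {Suc m}"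
  shows "del s Cs \<in> ordered_set_partitions m c"
proof -
  have L: "length Cs = Suc c" using C by (simp add: osp_iff)
  have ne: "\<And>k. k<Suc c \<Longrightarrow> Cs!k \<noteq> {}" using C by (simp add: osp_iff)
  have dj: "\<And>i j. i<Suc c \<Longrightarrow> j<Suc c \<Longrightarrow> i\<noteq>j \<Longrightarrow> Cs!i \<inter> Cs!j = {}" using C by (simp add: osp_iff)
  have un: "\<And>x. (\<exists>i<Suc c. x \<in> Cs!i) \<longleftrightarrow> x \<in> {1..Suc m}" using C by (simp add: osp_iff)
  have nN: "Suc m \<notin> Cs!k" if "k < Suc c" "k \<noteq> s" for k
  proof -
    have "Cs!k \<inter> Cs!s = {}" using dj[of k s] that s by simp
    then show ?thesis using Cs by simp
  qed
  show ?thesis unfolding osp_iff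
  proof (intro conjI allI impI)
    show "length (del s Cs) = c" using L s by simp
  next
    fix i assume i: "i < c" 
    have e: "del s Cs ! i = Cs ! (if i < s then i else Suc i)" using s L by (simp add: nth_del)
    have "(if i < s then i else Suc i) < Suc c" using i by simp
    then show "del s Cs ! i \<noteq> {}" using ne e by simp
  next
    fix i j assume "i < c" "j < c" "i \<noteq> j"
    then show "del s Cs ! i \<inter> del s Cs ! j = {}"
    proof -
      define f where "f = (\<lambda>k::nat. if k < s then k else Suc k)"
      have e: "\<And>k. del s Cs ! k = Cs ! f k" using s L by (simp add: nth_del f_def)
      have "f i \<noteq> f j" "f i < Suc c" "f j < Suc c" using \<open>i<c\<close> \<open>j<c\<close> \<open>i\<noteq>j\<close> s by (auto simp: f_def)
      then show ?thesis using dj e by simp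
    qed
  next
    fix x
    show "(\<exists>i<c. x \<in> del s Cs ! i) = (x \<in> {1..m})"
    proof
      assume "\<exists>i<c. x \<in> del s Cs ! i"
      then obtain i where i: "i < c" "x \<in> del s Cs ! i" by blast
      define k where "k = (if i < s then i else Suc i)"
      have e: "del s Cs ! i = Cs ! k" using s L by (simp add: nth_del k_def)
      have k: "k < Suc c" "k \<noteq> s" using i by (auto simp: k_def)
      have "x \<in> Cs!k" using i e by simp
      moreover have "x \<noteq> Suc m" using nN[OF k] \<open>x \<in> Cs!k\<close> by blast
      ultimately show "x \<in> {1..m}" using un[of x] k by auto
    next
      assume x: "x \<in> {1..m}"
      then have "x \<in> {1..Suc m}" by simp
      then obtain k where k: "k < Suc c" "x \<in> Cs!k" using un[of x] by blast
      have "k \<noteq> s"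
      proof
        assume "k = s" then have "x = Suc m" using k Cs by simp
        then show False using x by simp
      qed
      define i where "i = (if k < s then k else k - 1)"
      have "i < c" using k \<open>k \<noteq> s\<close> s by (auto simp: i_def)
      have "(if i < s then i else Suc i) = k" using \<open>k \<noteq> s\<close> by (auto simp: i_def)
      moreover have "del s Cs ! i = Cs ! (if i < s then i else Suc i)" using s L by (simp add: nth_del)
      ultimately have "del s Cs ! i = Cs ! k" by simp
      then show "\<exists>i<c. x \<in> del s Cs ! i" using \<open>i < c\<close> k by auto
    qed
  qed
qed

lemma ins2_del2: "p < length Cs \<Longrightarrow> N \<in> Cs!p \<Longrightarrow> ins2 N p (Cs[p := Cs!p - {N}]) = Cs"
  by (rule nth_equalityI) (auto simp: nth_ins2)

lemma del2_ins2: "p < length Bs \<Longrightarrow> N \<notin> Bs!p \<Longrightarrow> (ins2 N p Bs)[p := ins2 N p Bs ! p - {N}] = Bs"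
  by (rule nth_equalityI) (auto simp: nth_ins2 nth_list_update)

lemma osp_del2:
  assumes C: "Cs \<in> ordered_set_partitions (Suc m) c" and p: "p < c" and N: "Suc m \<in> Cs!p" and ns: "Cs!p \<noteq> {Suc m}"
  shows "Cs[p := Cs!p - {Suc m}] \<in> ordered_set_partitions m c"
proof -
  have L: "length Cs = c" using C by (simp add: osp_iff)
  have ne: "\<And>k. k<c \<Longrightarrow> Cs!k \<noteq> {}" using C by (simp add: osp_iff)
  have dj: "\<And>i j. i<c \<Longrightarrow> j<c \<Longrightarrow> i\<noteq>j \<Longrightarrow> Cs!i \<inter> Cs!j = {}" using C by (simp add: osp_iff)
  have un: "\<And>x. (\<exists>i<c. x \<in> Cs!i) \<longleftrightarrow> x \<in> {1..Suc m}" using C by (simp add: osp_iff)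
  have nN: "\<And>k. k < c \<Longrightarrow> k \<noteq> p \<Longrightarrow> Suc m \<notin> Cs!k" using dj[of _ p] p N by blast
  have nep: "Cs!p - {Suc m} \<noteq> {}" using N ns by auto
  show ?thesis unfolding osp_iff
  proof (intro conjI allI impI)
    show "length (Cs[p := Cs!p - {Suc m}]) = c" using L by simp
  next
    fix i assume "i < c" then show "Cs[p := Cs!p - {Suc m}] ! i \<noteq> {}"
      using ne[of i] nep L by (cases "i = p") (auto simp: nth_list_update)
  next
    fix i j assume "i < c" "j < c" "i \<noteq> j"
    then show "Cs[p := Cs!p - {Suc m}] ! i \<inter> Cs[p := Cs!p - {Suc m}] ! j = {}"
    proof -
      have "\<And>k. k < c \<Longrightarrow> Cs[p := Cs!p - {Suc m}] ! k \<subseteq> Cs!k"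
        using L by (case_tac "k = p") auto
      then show ?thesis using dj[of i j] \<open>i<c\<close> \<open>j<c\<close> \<open>i\<noteq>j\<close> by blast
    qed
  next
    fix x
    show "(\<exists>i<c. x \<in> Cs[p := Cs!p - {Suc m}] ! i) = (x \<in> {1..m})"
    proof
      assume "\<exists>i<c. x \<in> Cs[p := Cs!p - {Suc m}] ! i"
      then obtain i where i: "i < c" "x \<in> Cs[p := Cs!p - {Suc m}] ! i" by blast
      have "x \<in> Cs!i \<and> x \<noteq> Suc m"
      proof (cases "i = p")
        case True then show ?thesis using i L by simp
      next
        case False then show ?thesis using i L nN[of i] by auto
      qed
      then show "x \<in> {1..m}" using un[of x] i by auto
    next
      assume x: "x \<in> {1..m}"
      then obtain k where k: "k < c" "x \<in> Cs!k" using un[of x] by auto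
      have "x \<in> Cs[p := Cs!p - {Suc m}] ! k"
      proof (cases "k = p")
        case True then show ?thesis using k x L by simp
      next
        case False then show ?thesis using k x L by simp
      qed
      then show "\<exists>i<c. x \<in> Cs[p := Cs!p - {Suc m}] ! i" using k by blast
    qed
  qed
qed

lemma osp_len: "Bs \<in> ordered_set_partitions n k \<Longrightarrow> length Bs = k"
  by (simp add: ordered_set_partitions_def)

lemma bij1:
  assumes p: "p \<le> c"
  shows "bij_betw (ins1 (Suc m) p) {Bs \<in> ordered_set_partitions m c. Q (ins1 (Suc m) p Bs)}
           {Cs \<in> ordered_set_partitions (Suc m) (Suc c). Q Cs \<and> Cs!p = {Suc m}}"
proof (rule bij_betw_byWitness[where f' = "del p"])
  show "\<forall>a\<in>{Bs \<in> ordered_set_partitions m c. Q (ins1 (Suc m) p Bs)}. del p (ins1 (Suc m) p a) = a"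
    using p osp_len by fastforce
  show "\<forall>a'\<in>{Cs \<in> ordered_set_partitions (Suc m) (Suc c). Q Cs \<and> Cs ! p = {Suc m}}. ins1 (Suc m) p (del p a') = a'"
  proof
    fix a' assume "a' \<in> {Cs \<in> ordered_set_partitions (Suc m) (Suc c). Q Cs \<and> Cs ! p = {Suc m}}"
    then show "ins1 (Suc m) p (del p a') = a'" using p osp_len[of a'] by (intro ins1_del) auto
  qed
  show "ins1 (Suc m) p ` {Bs \<in> ordered_set_partitions m c. Q (ins1 (Suc m) p Bs)}
    \<subseteq> {Cs \<in> ordered_set_partitions (Suc m) (Suc c). Q Cs \<and> Cs ! p = {Suc m}}"
  proof
    fix C assume "C \<in> ins1 (Suc m) p ` {Bs \<in> ordered_set_partitions m c. Q (ins1 (Suc m) p Bs)}"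
    then obtain Bs where B: "Bs \<in> ordered_set_partitions m c" "Q (ins1 (Suc m) p Bs)" "C = ins1 (Suc m) p Bs" by blast
    have L: "length Bs = c" using B osp_len by blast
    show "C \<in> {Cs \<in> ordered_set_partitions (Suc m) (Suc c). Q Cs \<and> Cs ! p = {Suc m}}"
      using B osp_ins1[OF B(1) p] p L nth_ins1[of p Bs "Suc m" p] by simp
  qed
  show "del p ` {Cs \<in> ordered_set_partitions (Suc m) (Suc c). Q Cs \<and> Cs ! p = {Suc m}}
    \<subseteq> {Bs \<in> ordered_set_partitions m c. Q (ins1 (Suc m) p Bs)}"
  proof
    fix B assume "B \<in> del p ` {Cs \<in> ordered_set_partitions (Suc m) (Suc c). Q Cs \<and> Cs ! p = {Suc m}}"
    then obtain Cs where Cs: "Cs \<in> ordered_set_partitions (Suc m) (Suc c)" "Q Cs" "Cs!p = {Suc m}" "B = del p Cs" by blast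
    have L: "length Cs = Suc c" using Cs osp_len by blast
    have "p < Suc c" using p by simp
    show "B \<in> {Bs \<in> ordered_set_partitions m c. Q (ins1 (Suc m) p Bs)}"
      using Cs osp_del[OF Cs(1) \<open>p < Suc c\<close> Cs(3)] ins1_del[of p Cs "Suc m"] p L by auto
  qed
qed

lemma bij2:
  assumes p: "p < c"
  shows "bij_betw (ins2 (Suc m) p) {Bs \<in> ordered_set_partitions m c. Q (ins2 (Suc m) p Bs)}
           {Cs \<in> ordered_set_partitions (Suc m) c. Q Cs \<and> Suc m \<in> Cs!p \<and> Cs!p \<noteq> {Suc m}}"
proof (rule bij_betw_byWitness[where f' = "\<lambda>Cs. Cs[p := Cs!p - {Suc m}]"])
  show "\<forall>a\<in>{Bs \<in> ordered_set_partitions m c. Q (ins2 (Suc m) p Bs)}. (ins2 (Suc m) p a)[p := ins2 (Suc m) p a ! p - {Suc m}] = a"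
  proof
    fix a assume a: "a \<in> {Bs \<in> ordered_set_partitions m c. Q (ins2 (Suc m) p Bs)}"
    then have "Suc m \<notin> a!p" using osp_elem[of a m c p] p by fastforce
    moreover have "length a = c" using a osp_len by blast
    ultimately show "(ins2 (Suc m) p a)[p := ins2 (Suc m) p a ! p - {Suc m}] = a"
      using del2_ins2 p by simp
  qed
  show "\<forall>a'\<in>{Cs \<in> ordered_set_partitions (Suc m) c. Q Cs \<and> Suc m \<in> Cs!p \<and> Cs!p \<noteq> {Suc m}}. ins2 (Suc m) p (a'[p := a'!p - {Suc m}]) = a'"
  proof
    fix a' assume "a' \<in> {Cs \<in> ordered_set_partitions (Suc m) c. Q Cs \<and> Suc m \<in> Cs!p \<and> Cs!p \<noteq> {Suc m}}"
    then show "ins2 (Suc m) p (a'[p := a'!p - {Suc m}]) = a'" using p osp_len[of a'] by (intro ins2_del2) auto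
  qed
  show "ins2 (Suc m) p ` {Bs \<in> ordered_set_partitions m c. Q (ins2 (Suc m) p Bs)}
    \<subseteq> {Cs \<in> ordered_set_partitions (Suc m) c. Q Cs \<and> Suc m \<in> Cs!p \<and> Cs!p \<noteq> {Suc m}}"
  proof
    fix C assume "C \<in> ins2 (Suc m) p ` {Bs \<in> ordered_set_partitions m c. Q (ins2 (Suc m) p Bs)}"
    then obtain Bs where B: "Bs \<in> ordered_set_partitions m c" "Q (ins2 (Suc m) p Bs)" "C = ins2 (Suc m) p Bs" by blast
    have L: "length Bs = c" using B osp_len by blast
    have "Bs!p \<noteq> {}" using B p by (simp add: osp_iff)
    moreover have "Suc m \<notin> Bs!p" using osp_elem[OF B(1) p] by fastforce
    ultimately have "insert (Suc m) (Bs!p) \<noteq> {Suc m}" by auto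
    then show "C \<in> {Cs \<in> ordered_set_partitions (Suc m) c. Q Cs \<and> Suc m \<in> Cs!p \<and> Cs!p \<noteq> {Suc m}}"
      using B osp_ins2[OF B(1) p] p L nth_ins2[of p Bs "Suc m" p] by simp
  qed
  show "(\<lambda>Cs. Cs[p := Cs!p - {Suc m}]) ` {Cs \<in> ordered_set_partitions (Suc m) c. Q Cs \<and> Suc m \<in> Cs!p \<and> Cs!p \<noteq> {Suc m}}
    \<subseteq> {Bs \<in> ordered_set_partitions m c. Q (ins2 (Suc m) p Bs)}"
  proof
    fix B assume "B \<in> (\<lambda>Cs. Cs[p := Cs!p - {Suc m}]) ` {Cs \<in> ordered_set_partitions (Suc m) c. Q Cs \<and> Suc m \<in> Cs!p \<and> Cs!p \<noteq> {Suc m}}"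
    then obtain Cs where Cs: "Cs \<in> ordered_set_partitions (Suc m) c" "Q Cs" "Suc m \<in> Cs!p" "Cs!p \<noteq> {Suc m}" "B = Cs[p := Cs!p - {Suc m}]" by blast
    have L: "length Cs = c" using Cs osp_len by blast
    show "B \<in> {Bs \<in> ordered_set_partitions m c. Q (ins2 (Suc m) p Bs)}"
      using Cs osp_del2[OF Cs(1) p Cs(3) Cs(4)] ins2_del2[of p Cs "Suc m"] p L by auto
  qed
qed

lemma avoidD: "avoid Bs \<Longrightarrow> i<j \<Longrightarrow> j<l \<Longrightarrow> l<length Bs \<Longrightarrow> x\<in>Bs!i \<Longrightarrow> y\<in>Bs!j \<Longrightarrow> z\<in>Bs!l \<Longrightarrow> x<y \<Longrightarrow> y<z \<Longrightarrow> False"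
  unfolding avoid_def by blast

lemma avoidI: assumes "\<And>i j l x y z. i<j \<Longrightarrow> j<l \<Longrightarrow> l<length Bs \<Longrightarrow> x\<in>Bs!i \<Longrightarrow> y\<in>Bs!j \<Longrightarrow> z\<in>Bs!l \<Longrightarrow> x<y \<Longrightarrow> y<z \<Longrightarrow> False" shows "avoid Bs"
  unfolding avoid_def
proof (intro allI impI notI)
  fix i j l x y z assume "i<j" "j<l" "l<length Bs" "x\<in>Bs!i" "y\<in>Bs!j" "z\<in>Bs!l" "x<y \<and> y<z"
  then show False using assms[of i j l x y z] by blast
qed
lemma decD: "dec t Bs \<Longrightarrow> i<j \<Longrightarrow> j<t \<Longrightarrow> x\<in>Bs!i \<Longrightarrow> y\<in>Bs!j \<Longrightarrow> x<y \<Longrightarrow> False"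
  unfolding dec_def by blast
lemma dec_mono: "dec s Bs \<Longrightarrow> t \<le> s \<Longrightarrow> dec t Bs"
  unfolding dec_def by (meson le_trans less_le_trans)

lemma avoid_ins1:
  assumes bd: "\<And>k x. k < length Bs \<Longrightarrow> x \<in> Bs!k \<Longrightarrow> x < N" and s: "s \<le> length Bs"
  shows "avoid (ins1 N s Bs) \<longleftrightarrow> avoid Bs \<and> dec s Bs"
proof
  assume A: "avoid (ins1 N s Bs)"
  let ?g = "\<lambda>k. if k < s then k else Suc k"
  have g: "\<And>k. k < length Bs \<Longrightarrow> ins1 N s Bs ! (?g k) = Bs!k" using s by (auto simp: nth_ins1)
  have "avoid Bs" unfolding avoid_def
  proof (intro allI impI notI)
    fix i j l x y z assume h: "i<j" "j<l" "l<length Bs" "x\<in>Bs!i" "y\<in>Bs!j" "z\<in>Bs!l" "x<y \<and> y<z"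
    have "?g i < ?g j" "?g j < ?g l" "?g l < length (ins1 N s Bs)" using h s by auto
    moreover have "x \<in> ins1 N s Bs ! ?g i" "y \<in> ins1 N s Bs ! ?g j" "z \<in> ins1 N s Bs ! ?g l"
      using g h by auto
    ultimately show False using avoidD[OF A, of "?g i" "?g j" "?g l" x y z] h(7) by blast
  qed
  moreover have "dec s Bs" unfolding dec_def
  proof (intro conjI allI impI notI)
    show "s \<le> length Bs" by (fact s)
    fix i j x y assume h: "i<j" "j<s" "x\<in>Bs!i" "y\<in>Bs!j" "x<y"
    have "j < length Bs" using h s by simp
    then have "y < N" using bd h by blast
    moreover have "x \<in> ins1 N s Bs ! i" "y \<in> ins1 N s Bs ! j" "N \<in> ins1 N s Bs ! s"
      using h s by (auto simp: nth_ins1)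
    moreover have "s < length (ins1 N s Bs)" using s by simp
    ultimately show False using avoidD[OF A, of i j s x y N] h by simp
  qed
  ultimately show "avoid Bs \<and> dec s Bs" by blast
next
  assume "avoid Bs \<and> dec s Bs"
  then have A: "avoid Bs" and D: "dec s Bs" by auto
  let ?f = "\<lambda>k. if k < s then k else k - 1"
  have f: "\<And>k. k < Suc (length Bs) \<Longrightarrow> k \<noteq> s \<Longrightarrow> ins1 N s Bs ! k = Bs!(?f k) \<and> ?f k < length Bs"
    using s by (auto simp: nth_ins1)
  have fs: "\<And>k. k < Suc (length Bs) \<Longrightarrow> k = s \<Longrightarrow> ins1 N s Bs ! k = {N}" using s by (auto simp: nth_ins1)
  show "avoid (ins1 N s Bs)" unfolding avoid_def
  proof (intro allI impI notI)
    fix i j l x y z assume h: "i<j" "j<l" "l<length (ins1 N s Bs)" "x\<in>ins1 N s Bs!i" "y\<in>ins1 N s Bs!j" "z\<in>ins1 N s Bs!l" "x<y \<and> y<z"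
    have L: "length (ins1 N s Bs) = Suc (length Bs)" using s by simp
    show False
    proof (cases "l = s")
      case True
      then have "i < s" "j < s" using h by auto
      then have "x \<in> Bs!i" "y \<in> Bs!j" using h s by (auto simp: nth_ins1)
      then show False using decD[OF D, of i j x y] h \<open>i<s\<close> \<open>j<s\<close> by blast
    next
      case ls: False
      then have zB: "z \<in> Bs!(?f l)" "?f l < length Bs" using f[of l] h L by auto
      then have zN: "z < N" using bd by blast
      show False
      proof (cases "j = s")
        case True then have "y = N" using fs[of j] h L by auto
        then show False using zN h by auto
      next
        case js: False
        then have yB: "y \<in> Bs!(?f j)" using f[of j] h L by auto
        have yN: "y < N" using bd f[of j] js h L by auto
        show False
        proof (cases "i = s")
          case True then have "x = N" using fs[of i] h L by auto
          then show False using yN h by auto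
        next
          case False
          then have xB: "x \<in> Bs!(?f i)" using f[of i] h L by auto
          have "?f i < ?f j" "?f j < ?f l" using h False js ls by auto
          then show False using avoidD[OF A, of "?f i" "?f j" "?f l" x y z] xB yB zB h(7) by blast
        qed
      qed
    qed
  qed
qed

lemma avoid_ins2:
  assumes bd: "\<And>k x. k < length Bs \<Longrightarrow> x \<in> Bs!k \<Longrightarrow> x < N" and p: "p < length Bs"
  shows "avoid (ins2 N p Bs) \<longleftrightarrow> avoid Bs \<and> dec p Bs"
proof
  assume A: "avoid (ins2 N p Bs)"
  have sub: "\<And>k. k < length Bs \<Longrightarrow> Bs!k \<subseteq> ins2 N p Bs ! k" using p by (auto simp: nth_ins2)
  have "avoid Bs"
  proof (rule avoidI)
    fix i j l x y z assume h: "i<j" "j<l" "l<length Bs" "x\<in>Bs!i" "y\<in>Bs!j" "z\<in>Bs!l" "x<y" "y<z"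
    have "i < length Bs" "j < length Bs" using h by auto
    then have "x\<in>ins2 N p Bs!i" "y\<in>ins2 N p Bs!j" "z\<in>ins2 N p Bs!l" using sub h by blast+
    then show False using avoidD[OF A, of i j l x y z] h by simp
  qed
  moreover have "dec p Bs" unfolding dec_def
  proof (intro conjI allI impI notI)
    show "p \<le> length Bs" using p by simp
    fix i j x y assume h: "i<j" "j<p" "x\<in>Bs!i" "y\<in>Bs!j" "x<y"
    have "j < length Bs" using h p by simp
    then have "y < N" using bd h by blast
    moreover have "x \<in> ins2 N p Bs ! i" "y \<in> ins2 N p Bs ! j" "N \<in> ins2 N p Bs ! p"
      using h p by (auto simp: nth_ins2)
    ultimately show False using avoidD[OF A, of i j p x y N] h p by simp
  qed
  ultimately show "avoid Bs \<and> dec p Bs" by blast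
next
  assume "avoid Bs \<and> dec p Bs"
  then have A: "avoid Bs" and D: "dec p Bs" by auto
  show "avoid (ins2 N p Bs)" unfolding avoid_def
  proof (intro allI impI notI)
    fix i j l x y z assume h: "i<j" "j<l" "l<length (ins2 N p Bs)" "x\<in>ins2 N p Bs!i" "y\<in>ins2 N p Bs!j" "z\<in>ins2 N p Bs!l" "x<y \<and> y<z"
    have mem: "\<And>k w. k < length Bs \<Longrightarrow> w \<in> ins2 N p Bs ! k \<Longrightarrow> (k = p \<and> w = N) \<or> w \<in> Bs!k"
      using p by (auto simp: nth_ins2 split: if_splits)
    have Ny: "\<And>k w. k < length Bs \<Longrightarrow> w \<in> ins2 N p Bs ! k \<Longrightarrow> w \<le> N"
      using mem bd by fastforce
    have yB: "y \<in> Bs!j" using mem[of j y] Ny[of l z] h by auto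
    have xB: "x \<in> Bs!i" using mem[of i x] Ny[of l z] h by auto
    show False
    proof (cases "z \<in> Bs!l")
      case True then show False using avoidD[OF A, of i j l x y z] xB yB h by simp
    next
      case False then have "l = p" using mem[of l z] h by auto
      then show False using decD[OF D, of i j x y] xB yB h by simp
    qed
  qed
qed

lemma decI: "t \<le> length Bs \<Longrightarrow> (\<And>i j x y. i<j \<Longrightarrow> j<t \<Longrightarrow> x\<in>Bs!i \<Longrightarrow> y\<in>Bs!j \<Longrightarrow> x<y \<Longrightarrow> False) \<Longrightarrow> dec t Bs"
  unfolding dec_def by blast

lemma decL: "dec t Bs \<Longrightarrow> t \<le> length Bs"
  unfolding dec_def by blast

lemma dec_ins1_0:
  assumes bd: "\<And>k x. k < length Bs \<Longrightarrow> x \<in> Bs!k \<Longrightarrow> x < N"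
  shows "dec t (ins1 N 0 Bs) \<longleftrightarrow> t = 0 \<or> dec (t - 1) Bs"
proof -
  have e: "ins1 N 0 Bs = {N} # Bs" by (simp add: ins1_def)
  show ?thesis
  proof
    assume d: "dec t (ins1 N 0 Bs)"
    show "t = 0 \<or> dec (t - 1) Bs"
    proof (cases t)
      case (Suc t')
      have "dec t' Bs"
      proof (rule decI)
        show "t' \<le> length Bs" using decL[OF d] Suc e by simp
        fix i j x y assume h: "i<j" "j<t'" "x\<in>Bs!i" "y\<in>Bs!j" "x<y"
        have "x \<in> ins1 N 0 Bs ! Suc i" "y \<in> ins1 N 0 Bs ! Suc j" using h e by simp_all
        then show False using decD[OF d, of "Suc i" "Suc j" x y] h Suc by simp
      qed
      then show ?thesis using Suc by simp
    qed simp
  next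
    assume h: "t = 0 \<or> dec (t - 1) Bs"
    show "dec t (ins1 N 0 Bs)"
    proof (cases t)
      case 0 then show ?thesis by (simp add: dec_def)
    next
      case (Suc t')
      then have d: "dec t' Bs" using h by simp
      show ?thesis unfolding e
      proof (rule decI)
        show "t \<le> length ({N} # Bs)" using decL[OF d] Suc by simp
        fix i j x y assume hh: "i<j" "j<t" "x\<in>({N} # Bs)!i" "y\<in>({N}#Bs)!j" "x<y"
        obtain j' where j: "j = Suc j'" using hh by (cases j) auto
        have yB: "y \<in> Bs!j'" using hh j by simp
        have j'l: "j' < length Bs" using decL[OF d] hh j Suc by simp
        show False
        proof (cases i)
          case 0
          then have "x = N" using hh by simp
          moreover have "y < N" using bd[OF j'l yB] .
          ultimately show False using hh by simp
        next
          case (Suc i')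
          then have "x \<in> Bs!i'" "i' < j'" "j' < t'" using hh j \<open>t = Suc t'\<close> by simp_all
          then show False using decD[OF d, of i' j' x y] yB hh by simp
        qed
      qed
    qed
  qed
qed

lemma dec_ins1_pos:
  assumes bd: "\<And>k x. k < length Bs \<Longrightarrow> x \<in> Bs!k \<Longrightarrow> x < N" and s: "1 \<le> s" "s \<le> length Bs"
    and ne: "Bs!0 \<noteq> {}"
  shows "dec t (ins1 N s Bs) \<longleftrightarrow> t \<le> s \<and> dec t Bs"
proof
  assume d: "dec t (ins1 N s Bs)"
  have ts: "t \<le> s"
  proof (rule ccontr)
    assume "\<not> t \<le> s"
    obtain x where x: "x \<in> Bs!0" using ne by auto
    moreover have "0 < length Bs" using s by linarith
    ultimately have "x < N" using bd by blast
    moreover have "x \<in> ins1 N s Bs ! 0" "N \<in> ins1 N s Bs ! s" using x s by (auto simp: nth_ins1)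
    ultimately show False using decD[OF d, of 0 s x N] \<open>\<not> t \<le> s\<close> s by simp
  qed
  moreover have "dec t Bs"
  proof (rule decI)
    show "t \<le> length Bs" using ts s by simp
    fix i j x y assume h: "i<j" "j<t" "x\<in>Bs!i" "y\<in>Bs!j" "x<y"
    have "x \<in> ins1 N s Bs ! i" "y \<in> ins1 N s Bs ! j" using h ts s by (simp_all add: nth_ins1)
    then show False using decD[OF d, of i j x y] h by simp
  qed
  ultimately show "t \<le> s \<and> dec t Bs" by blast
next
  assume h: "t \<le> s \<and> dec t Bs"
  show "dec t (ins1 N s Bs)"
  proof (rule decI)
    show "t \<le> length (ins1 N s Bs)" using h s by simp
    fix i j x y assume hh: "i<j" "j<t" "x\<in>ins1 N s Bs!i" "y\<in>ins1 N s Bs!j" "x<y"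
    have "x \<in> Bs!i" "y \<in> Bs!j" using hh h s by (simp_all add: nth_ins1)
    then show False using decD[of t Bs i j x y] h hh by simp
  qed
qed

lemma dec_ins2_0:
  assumes bd: "\<And>k x. k < length Bs \<Longrightarrow> x \<in> Bs!k \<Longrightarrow> x < N" and p: "0 < length Bs"
  shows "dec t (ins2 N 0 Bs) \<longleftrightarrow> dec t Bs"
proof
  assume d: "dec t (ins2 N 0 Bs)"
  show "dec t Bs"
  proof (rule decI)
    show "t \<le> length Bs" using decL[OF d] by simp
    fix i j x y assume h: "i<j" "j<t" "x\<in>Bs!i" "y\<in>Bs!j" "x<y"
    have "x \<in> ins2 N 0 Bs ! i" "y \<in> ins2 N 0 Bs ! j" using h p by (auto simp: nth_ins2)
    then show False using decD[OF d, of i j x y] h by simp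
  qed
next
  assume d: "dec t Bs"
  show "dec t (ins2 N 0 Bs)"
  proof (rule decI)
    show "t \<le> length (ins2 N 0 Bs)" using decL[OF d] by simp
    fix i j x y assume h: "i<j" "j<t" "x\<in>ins2 N 0 Bs!i" "y\<in>ins2 N 0 Bs!j" "x<y"
    have jl: "j < length Bs" using h decL[OF d] by simp
    have yB: "y \<in> Bs!j" using h p by (simp add: nth_ins2)
    have yN: "y < N" using bd[OF jl yB] .
    have "x \<in> Bs!i \<or> x = N" using h p by (auto simp: nth_ins2 split: if_splits)
    then show False
    proof
      assume "x \<in> Bs!i" then show False using decD[OF d, of i j x y] h yB by simp
    next
      assume "x = N" then show False using yN h by simp
    qed
  qed
qed

lemma dec_ins2_pos:
  assumes bd: "\<And>k x. k < length Bs \<Longrightarrow> x \<in> Bs!k \<Longrightarrow> x < N" and p: "1 \<le> p" "p < length Bs"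
    and ne: "Bs!0 \<noteq> {}"
  shows "dec t (ins2 N p Bs) \<longleftrightarrow> t \<le> p \<and> dec t Bs"
proof
  assume d: "dec t (ins2 N p Bs)"
  have ts: "t \<le> p"
  proof (rule ccontr)
    assume "\<not> t \<le> p"
    obtain x where x: "x \<in> Bs!0" using ne by auto
    moreover have "0 < length Bs" using p by linarith
    ultimately have "x < N" using bd by blast
    moreover have "x \<in> ins2 N p Bs ! 0" "N \<in> ins2 N p Bs ! p" using x p by (auto simp: nth_ins2)
    ultimately show False using decD[OF d, of 0 p x N] \<open>\<not> t \<le> p\<close> p by simp
  qed
  moreover have "dec t Bs"
  proof (rule decI)
    show "t \<le> length Bs" using ts p by simp
    fix i j x y assume h: "i<j" "j<t" "x\<in>Bs!i" "y\<in>Bs!j" "x<y"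
    have "x \<in> ins2 N p Bs ! i" "y \<in> ins2 N p Bs ! j" using h ts p by (simp_all add: nth_ins2)
    then show False using decD[OF d, of i j x y] h by simp
  qed
  ultimately show "t \<le> p \<and> dec t Bs" by blast
next
  assume h: "t \<le> p \<and> dec t Bs"
  show "dec t (ins2 N p Bs)"
  proof (rule decI)
    show "t \<le> length (ins2 N p Bs)" using h p by simp
    fix i j x y assume hh: "i<j" "j<t" "x\<in>ins2 N p Bs!i" "y\<in>ins2 N p Bs!j" "x<y"
    have "x \<in> Bs!i" "y \<in> Bs!j" using hh h p by (simp_all add: nth_ins2)
    then show False using decD[of t Bs i j x y] h hh by simp
  qed
qed

definition AV :: "nat \<Rightarrow> nat \<Rightarrow> nat \<Rightarrow> nat set list set" where
  "AV m c t = {Bs \<in> ordered_set_partitions m c. avoid Bs \<and> dec t Bs}"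

definition A :: "nat \<Rightarrow> nat \<Rightarrow> nat \<Rightarrow> nat" where
  "A m c t = card (AV m c t)"

lemma finite_osp: "finite (ordered_set_partitions m c)"
proof -
  have "ordered_set_partitions m c \<subseteq> {xs. set xs \<subseteq> Pow {1..m} \<and> length xs = c}"
    unfolding ordered_set_partitions_def by auto
  moreover have "finite {xs. set xs \<subseteq> Pow {1..m} \<and> length xs = c}"
    by (rule finite_lists_length_eq) simp
  ultimately show ?thesis by (rule finite_subset)
qed

lemma osp_bound: "Bs \<in> ordered_set_partitions m c \<Longrightarrow> k < length Bs \<Longrightarrow> x \<in> Bs!k \<Longrightarrow> x < Suc m"
  using osp_elem[of Bs m c k x] osp_len[of Bs m c] by auto

lemma osp_ex_block: "Cs \<in> ordered_set_partitions (Suc m) c \<Longrightarrow> \<exists>p<c. Suc m \<in> Cs!p"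
  unfolding osp_iff by auto

lemma osp_uniq_block: "Cs \<in> ordered_set_partitions n c \<Longrightarrow> p < c \<Longrightarrow> q < c \<Longrightarrow> x \<in> Cs!p \<Longrightarrow> x \<in> Cs!q \<Longrightarrow> p = q"
  unfolding osp_iff by blast

lemma sum_split_lemma:
  fixes X :: nat
  shows "(\<Sum>p<Suc c. if p = 0 then X else if Suc t \<le> p then Y p else 0) = X + (\<Sum>p\<in>{Suc t..<Suc c}. Y p)"
proof -
  have "(\<Sum>p<Suc c. if p = 0 then X else if Suc t \<le> p then Y p else 0)
      = X + (\<Sum>i<c. if t \<le> i then Y (Suc i) else 0)"
    by (subst sum.lessThan_Suc_shift) simp
  also have "(\<Sum>i<c. if t \<le> i then Y (Suc i) else 0) = (\<Sum>i\<in>{i\<in>{..<c}. t \<le> i}. Y (Suc i))"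
    by (rule sum.inter_filter[symmetric]) simp
  also have "{i\<in>{..<c}. t \<le> i} = {t..<c}" by auto
  also have "(\<Sum>i\<in>{t..<c}. Y (Suc i)) = (\<Sum>p\<in>{Suc t..<Suc c}. Y p)"
    by (rule sum.shift_bounds_Suc_ivl[symmetric])
  finally show ?thesis .
qed

lemma card_S1:
  assumes p: "p \<le> c"
  shows "card {Cs \<in> ordered_set_partitions (Suc m) (Suc c). (avoid Cs \<and> dec (Suc t) Cs) \<and> Cs!p = {Suc m}}
       = (if p = 0 then A m c t else if Suc t \<le> p then A m c p else 0)"
proof -
  let ?Q = "\<lambda>Cs. avoid Cs \<and> dec (Suc t) Cs"
  have "card {Cs \<in> ordered_set_partitions (Suc m) (Suc c). ?Q Cs \<and> Cs!p = {Suc m}}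
      = card {Bs \<in> ordered_set_partitions m c. ?Q (ins1 (Suc m) p Bs)}"
    using bij_betw_same_card[OF bij1[OF p, of m ?Q]] by simp
  also have "{Bs \<in> ordered_set_partitions m c. ?Q (ins1 (Suc m) p Bs)}
      = (if p = 0 then AV m c t else if Suc t \<le> p then AV m c p else {})"
  proof -
    have eq: "?Q (ins1 (Suc m) p Bs) \<longleftrightarrow> (if p = 0 then avoid Bs \<and> dec t Bs else Suc t \<le> p \<and> avoid Bs \<and> dec p Bs)"
      if B: "Bs \<in> ordered_set_partitions m c" for Bs
    proof -
      have L: "length Bs = c" using osp_len[OF B] .
      have bd: "\<And>k x. k < length Bs \<Longrightarrow> x \<in> Bs!k \<Longrightarrow> x < Suc m" using osp_bound[OF B] by blast
      have av: "avoid (ins1 (Suc m) p Bs) \<longleftrightarrow> avoid Bs \<and> dec p Bs"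
        by (rule avoid_ins1) (use bd p L in auto)
      show ?thesis
      proof (cases "p = 0")
        case True
        have "dec 0 Bs" by (simp add: dec_def)
        moreover have "dec (Suc t) (ins1 (Suc m) 0 Bs) \<longleftrightarrow> Suc t = 0 \<or> dec (Suc t - 1) Bs"
          by (rule dec_ins1_0) (use bd in auto)
        ultimately show ?thesis using av True by simp
      next
        case False
        then have "0 < c" using p by simp
        then have "Bs!0 \<noteq> {}" using B by (simp add: osp_iff)
        then have "dec (Suc t) (ins1 (Suc m) p Bs) \<longleftrightarrow> Suc t \<le> p \<and> dec (Suc t) Bs"
          by (intro dec_ins1_pos) (use bd False p L in auto)
        then show ?thesis using av False dec_mono[of p Bs "Suc t"] by auto
      qed
    qed
    have "{Bs \<in> ordered_set_partitions m c. ?Q (ins1 (Suc m) p Bs)}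
       = {Bs \<in> ordered_set_partitions m c. (if p = 0 then avoid Bs \<and> dec t Bs else Suc t \<le> p \<and> avoid Bs \<and> dec p Bs)}"
      by (rule Collect_cong) (use eq in blast)
    then show ?thesis
      by (auto simp: AV_def)
  qed
  also have "card (if p = 0 then AV m c t else if Suc t \<le> p then AV m c p else {})
      = (if p = 0 then A m c t else if Suc t \<le> p then A m c p else 0)"
    by (simp add: A_def)
  finally show ?thesis .
qed

lemma card_S2:
  assumes p: "p < Suc c"
  shows "card {Cs \<in> ordered_set_partitions (Suc m) (Suc c). (avoid Cs \<and> dec (Suc t) Cs) \<and> Suc m \<in> Cs!p \<and> Cs!p \<noteq> {Suc m}}
       = (if p = 0 then A m (Suc c) (Suc t) else if Suc t \<le> p then A m (Suc c) p else 0)"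
proof -
  let ?Q = "\<lambda>Cs. avoid Cs \<and> dec (Suc t) Cs"
  have "card {Cs \<in> ordered_set_partitions (Suc m) (Suc c). ?Q Cs \<and> Suc m \<in> Cs!p \<and> Cs!p \<noteq> {Suc m}}
      = card {Bs \<in> ordered_set_partitions m (Suc c). ?Q (ins2 (Suc m) p Bs)}"
    using bij_betw_same_card[OF bij2[OF p, of m ?Q]] by simp
  also have "{Bs \<in> ordered_set_partitions m (Suc c). ?Q (ins2 (Suc m) p Bs)}
      = (if p = 0 then AV m (Suc c) (Suc t) else if Suc t \<le> p then AV m (Suc c) p else {})"
  proof -
    have eq: "?Q (ins2 (Suc m) p Bs) \<longleftrightarrow> (if p = 0 then avoid Bs \<and> dec (Suc t) Bs else Suc t \<le> p \<and> avoid Bs \<and> dec p Bs)"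
      if B: "Bs \<in> ordered_set_partitions m (Suc c)" for Bs
    proof -
      have L: "length Bs = Suc c" using osp_len[OF B] .
      have bd: "\<And>k x. k < length Bs \<Longrightarrow> x \<in> Bs!k \<Longrightarrow> x < Suc m" using osp_bound[OF B] by blast
      have av: "avoid (ins2 (Suc m) p Bs) \<longleftrightarrow> avoid Bs \<and> dec p Bs"
        by (rule avoid_ins2) (use bd p L in auto)
      show ?thesis
      proof (cases "p = 0")
        case True
        have "dec 0 Bs" by (simp add: dec_def)
        moreover have "dec (Suc t) (ins2 (Suc m) 0 Bs) \<longleftrightarrow> dec (Suc t) Bs"
          by (rule dec_ins2_0) (use bd L in auto)
        ultimately show ?thesis using av True by simp
      next
        case False
        have "Bs!0 \<noteq> {}" using B by (simp add: osp_iff)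
        then have "dec (Suc t) (ins2 (Suc m) p Bs) \<longleftrightarrow> Suc t \<le> p \<and> dec (Suc t) Bs"
          by (intro dec_ins2_pos) (use bd False p L in auto)
        then show ?thesis using av False dec_mono[of p Bs "Suc t"] by auto
      qed
    qed
    have "{Bs \<in> ordered_set_partitions m (Suc c). ?Q (ins2 (Suc m) p Bs)}
       = {Bs \<in> ordered_set_partitions m (Suc c). (if p = 0 then avoid Bs \<and> dec (Suc t) Bs else Suc t \<le> p \<and> avoid Bs \<and> dec p Bs)}"
      by (rule Collect_cong) (use eq in blast)
    then show ?thesis
      by (auto simp: AV_def)
  qed
  also have "card (if p = 0 then AV m (Suc c) (Suc t) else if Suc t \<le> p then AV m (Suc c) p else {})
      = (if p = 0 then A m (Suc c) (Suc t) else if Suc t \<le> p then A m (Suc c) p else 0)"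
    by (simp add: A_def)
  finally show ?thesis .
qed

theorem A_rec:
  "A (Suc m) (Suc c) (Suc t) = A m c t + (\<Sum>s\<in>{Suc t..<Suc c}. A m c s)
     + A m (Suc c) (Suc t) + (\<Sum>p\<in>{Suc t..<Suc c}. A m (Suc c) p)"
proof -
  let ?O = "ordered_set_partitions (Suc m) (Suc c)"
  let ?Q = "\<lambda>Cs. avoid Cs \<and> dec (Suc t) Cs"
  define S1 where "S1 p = {Cs \<in> ?O. ?Q Cs \<and> Cs!p = {Suc m}}" for p
  define S2 where "S2 p = {Cs \<in> ?O. ?Q Cs \<and> Suc m \<in> Cs!p \<and> Cs!p \<noteq> {Suc m}}" for p
  have fin: "\<And>X. X \<subseteq> ?O \<Longrightarrow> finite X" using finite_osp finite_subset by blast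
  have AVeq: "AV (Suc m) (Suc c) (Suc t) = (\<Union>p\<in>{..<Suc c}. S1 p \<union> S2 p)"
  proof
    show "AV (Suc m) (Suc c) (Suc t) \<subseteq> (\<Union>p\<in>{..<Suc c}. S1 p \<union> S2 p)"
    proof
      fix Cs assume C: "Cs \<in> AV (Suc m) (Suc c) (Suc t)"
      then have O: "Cs \<in> ?O" by (simp add: AV_def)
      obtain p where "p < Suc c" "Suc m \<in> Cs!p" using osp_ex_block[OF O] by blast
      then show "Cs \<in> (\<Union>p\<in>{..<Suc c}. S1 p \<union> S2 p)" using C by (auto simp: S1_def S2_def AV_def)
    qed
    show "(\<Union>p\<in>{..<Suc c}. S1 p \<union> S2 p) \<subseteq> AV (Suc m) (Suc c) (Suc t)"
      by (auto simp: S1_def S2_def AV_def)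
  qed
  have disj: "(S1 p \<union> S2 p) \<inter> (S1 q \<union> S2 q) = {}" if "p < Suc c" "q < Suc c" "p \<noteq> q" for p q
  proof -
    have "Cs \<notin> S1 q \<union> S2 q" if "Cs \<in> S1 p \<union> S2 p" for Cs
    proof
      assume "Cs \<in> S1 q \<union> S2 q"
      then have "Cs \<in> ?O" "Suc m \<in> Cs!q" by (auto simp: S1_def S2_def)
      moreover have "Suc m \<in> Cs!p" using \<open>Cs \<in> S1 p \<union> S2 p\<close> by (auto simp: S1_def S2_def)
      ultimately show False using osp_uniq_block[of Cs "Suc m" "Suc c" p q "Suc m"] \<open>p < Suc c\<close> \<open>q < Suc c\<close> \<open>p \<noteq> q\<close> by blast
    qed
    then show ?thesis by blast
  qed
  have "A (Suc m) (Suc c) (Suc t) = card (\<Union>p\<in>{..<Suc c}. S1 p \<union> S2 p)"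
    by (simp add: A_def AVeq)
  also have "\<dots> = (\<Sum>p<Suc c. card (S1 p \<union> S2 p))"
  proof (rule card_UN_disjoint)
    show "\<forall>i\<in>{..<Suc c}. finite (S1 i \<union> S2 i)"
    proof
      fix i show "finite (S1 i \<union> S2 i)" by (rule fin) (auto simp: S1_def S2_def)
    qed
    show "\<forall>i\<in>{..<Suc c}. \<forall>j\<in>{..<Suc c}. i \<noteq> j \<longrightarrow> (S1 i \<union> S2 i) \<inter> (S1 j \<union> S2 j) = {}"
      using disj by blast
  qed simp
  also have "\<dots> = (\<Sum>p<Suc c. card (S1 p) + card (S2 p))"
  proof (rule sum.cong)
    fix p assume "p \<in> {..<Suc c}"
    have "S1 p \<inter> S2 p = {}" by (auto simp: S1_def S2_def)
    moreover have "finite (S1 p)" "finite (S2 p)" by (auto simp: S1_def S2_def intro: fin)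
    ultimately show "card (S1 p \<union> S2 p) = card (S1 p) + card (S2 p)" by (simp add: card_Un_disjoint)
  qed simp
  also have "\<dots> = (\<Sum>p<Suc c. card (S1 p)) + (\<Sum>p<Suc c. card (S2 p))"
    by (simp add: sum.distrib)
  also have "(\<Sum>p<Suc c. card (S1 p)) = (\<Sum>p<Suc c. if p = 0 then A m c t else if Suc t \<le> p then A m c p else 0)"
  proof (rule sum.cong)
    fix p assume "p \<in> {..<Suc c}" then have "p \<le> c" by simp
    show "card (S1 p) = (if p = 0 then A m c t else if Suc t \<le> p then A m c p else 0)"
      unfolding S1_def by (rule card_S1[OF \<open>p \<le> c\<close>])
  qed simp
  also have "(\<Sum>p<Suc c. card (S2 p)) = (\<Sum>p<Suc c. if p = 0 then A m (Suc c) (Suc t) else if Suc t \<le> p then A m (Suc c) p else 0)"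
  proof (rule sum.cong)
    fix p assume "p \<in> {..<Suc c}" then have "p < Suc c" by simp
    show "card (S2 p) = (if p = 0 then A m (Suc c) (Suc t) else if Suc t \<le> p then A m (Suc c) p else 0)"
      unfolding S2_def by (rule card_S2[OF \<open>p < Suc c\<close>])
  qed simp
  finally show ?thesis by (simp only: sum_split_lemma add.assoc)
qed

lemma A_big: "c < t \<Longrightarrow> A m c t = 0"
proof -
  assume "c < t"
  have "AV m c t = {}"
  proof (rule ccontr)
    assume "AV m c t \<noteq> {}"
    then obtain Bs where "Bs \<in> ordered_set_partitions m c" "dec t Bs" by (auto simp: AV_def)
    then show False using osp_len[of Bs m c] decL[of t Bs] \<open>c < t\<close> by simp
  qed
  then show ?thesis by (simp add: A_def)
qed

lemma A_zero: "A m (Suc c) 0 = A m (Suc c) (Suc 0)"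
proof -
  have "AV m (Suc c) 0 = AV m (Suc c) (Suc 0)"
  proof -
    have "dec 0 Bs \<longleftrightarrow> dec (Suc 0) Bs" if "Bs \<in> ordered_set_partitions m (Suc c)" for Bs
      using osp_len[OF that] by (simp add: dec_def)
    then show ?thesis unfolding AV_def by blast
  qed
  then show ?thesis by (simp add: A_def)
qed

lemma A_000: "A 0 0 0 = 1"
proof -
  have "ordered_set_partitions 0 0 = {[]}" by (auto simp: ordered_set_partitions_def)
  moreover have "avoid []" "dec 0 []" by (auto simp: avoid_def dec_def)
  ultimately have "AV 0 0 0 = {[]}" by (auto simp: AV_def)
  then show ?thesis by (simp add: A_def)
qed

lemma A_0S: "A 0 (Suc c) t = 0"
proof -
  have "ordered_set_partitions 0 (Suc c) = {}"
  proof (rule ccontr)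
    assume "ordered_set_partitions 0 (Suc c) \<noteq> {}"
    then obtain Bs where B: "Bs \<in> ordered_set_partitions 0 (Suc c)" by blast
    then have "Bs!0 \<noteq> {}" by (simp add: osp_iff)
    then obtain x where "x \<in> Bs!0" by blast
    then have "1 \<le> x \<and> x \<le> 0" using osp_elem[OF B, of 0 x] by blast
    then show False by linarith
  qed
  then show ?thesis by (simp add: A_def AV_def)
qed

lemma A_S0: "A (Suc m) 0 t = 0"
proof -
  have "ordered_set_partitions (Suc m) 0 = {}"
    by (auto simp: ordered_set_partitions_def)
  then show ?thesis by (simp add: A_def AV_def)
qed

lemma contains_iff: "op_contains Bs [1,2,3] \<longleftrightarrow> \<not> avoid Bs"
proof
  assume "op_contains Bs [1,2,3]"
  then obtain idx b :: "nat \<Rightarrow> nat" where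
    sm: "strict_mono_on {0..<length [1::nat,2,3]} idx" and
    mem: "\<forall>j<length [1::nat,2,3]. idx j < length Bs \<and> b j \<in> Bs ! idx j" and
    ord: "\<forall>a<length [1::nat,2,3]. \<forall>c<length [1::nat,2,3]. b a < b c \<longleftrightarrow> [1::nat,2,3] ! a < [1,2,3] ! c"
    unfolding op_contains_def by blast
  have i: "idx 0 < idx 1" "idx 1 < idx 2" using sm unfolding strict_mono_on_def by auto
  have o: "b 0 < b 1" "b 1 < b 2" using ord[rule_format, of 0 1] ord[rule_format, of 1 2] by auto
  have m: "idx 2 < length Bs" "b 0 \<in> Bs ! idx 0" "b 1 \<in> Bs ! idx 1" "b 2 \<in> Bs ! idx 2"
    using mem[rule_format, of 0] mem[rule_format, of 1] mem[rule_format, of 2] by auto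
  show "\<not> avoid Bs"
  proof
    assume "avoid Bs"
    then show False using avoidD[of Bs "idx 0" "idx 1" "idx 2" "b 0" "b 1" "b 2"] i o m by blast
  qed
next
  assume "\<not> avoid Bs"
  then obtain i j l x y z where h: "i<j" "j<l" "l<length Bs" "x\<in>Bs!i" "y\<in>Bs!j" "z\<in>Bs!l" "x<y" "y<z"
    unfolding avoid_def by blast
  define idx where "idx = (\<lambda>k::nat. if k = 0 then i else if k = 1 then j else l)"
  define b where "b = (\<lambda>k::nat. if k = 0 then x else if k = 1 then y else z)"
  have three: "\<And>k::nat. k < 3 \<Longrightarrow> k = 0 \<or> k = 1 \<or> k = 2" by auto
  have "strict_mono_on {0..<length [1::nat,2,3]} idx"
    unfolding strict_mono_on_def
  proof (intro allI impI)
    fix r s assume "r \<in> {0..<length [1::nat,2,3]} \<and> s \<in> {0..<length [1::nat,2,3]} \<and> r < s"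
    then have "r < 3" "s < 3" "r < s" by auto
    then show "idx r < idx s" using three[of r] three[of s] h by (auto simp: idx_def)
  qed
  moreover have "\<forall>k<length [1::nat,2,3]. idx k < length Bs \<and> b k \<in> Bs ! idx k"
  proof (intro allI impI)
    fix k assume "k < length [1::nat,2,3]"
    then show "idx k < length Bs \<and> b k \<in> Bs ! idx k" using three[of k] h by (auto simp: idx_def b_def)
  qed
  moreover have "\<forall>a<length [1::nat,2,3]. \<forall>c<length [1::nat,2,3]. b a < b c \<longleftrightarrow> [1::nat,2,3] ! a < [1,2,3] ! c"
  proof (intro allI impI)
    fix a c assume "a < length [1::nat,2,3]" "c < length [1::nat,2,3]"
    then show "b a < b c \<longleftrightarrow> [1::nat,2,3] ! a < [1,2,3] ! c" using three[of a] three[of c] h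
      by (auto simp: b_def)
  qed
  ultimately show "op_contains Bs [1,2,3]" unfolding op_contains_def by blast
qed

lemma op_count_A: "op_count n k [1,2,3] = A n k 0"
proof -
  have "{Bs \<in> ordered_set_partitions n k. \<not> op_contains Bs [1,2,3]} = {Bs \<in> ordered_set_partitions n k. avoid Bs}"
    using contains_iff by blast
  also have "\<dots> = AV n k 0" by (simp add: AV_def dec_def)
  finally have "{Bs \<in> ordered_set_partitions n k. \<not> op_contains Bs [1,2,3]} = AV n k 0" .
  then show ?thesis by (simp add: op_count_def A_def)
qed

lemma A_blocks_big: "m < c \<Longrightarrow> A m c t = 0"
proof (induction m arbitrary: c t)
  case 0
  then obtain c' where "c = Suc c'" by (cases c) auto
  then show ?case by (simp add: A_0S)
next
  case (Suc m)
  then obtain c' where c: "c = Suc c'" by (cases c) auto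
  have z: "A m c' s = 0" "A m (Suc c') s = 0" for s using Suc c by auto
  show ?case
  proof (cases t)
    case 0
    then show ?thesis using c A_zero[of "Suc m" c'] A_rec[of m c' 0] z by simp
  next
    case (Suc t')
    then show ?thesis using c A_rec[of m c' t'] z by simp
  qed
qed

lemma sum_head:
  assumes "\<not> Suc t < Suc c \<Longrightarrow> f (Suc t) = (0::nat)"
  shows "(\<Sum>s\<in>{Suc t..<Suc c}. f s) = f (Suc t) + (\<Sum>s\<in>{Suc (Suc t)..<Suc c}. f s)"
proof (cases "Suc t < Suc c")
  case True then show ?thesis by (rule sum.atLeast_Suc_lessThan)
next
  case False then show ?thesis using assms by simp
qed

lemma perm_rec: "A (Suc m) (Suc m) (Suc t) = A m m t + A (Suc m) (Suc m) (Suc (Suc t))"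
proof -
  have z: "A m (Suc m) s = 0" for s by (simp add: A_blocks_big)
  have h: "(\<Sum>s\<in>{Suc t..<Suc m}. A m m s) = A m m (Suc t) + (\<Sum>s\<in>{Suc (Suc t)..<Suc m}. A m m s)"
    by (rule sum_head) (simp add: A_big)
  show ?thesis using A_rec[of m m t] A_rec[of m m "Suc t"] z h by simp
qed

lemma loc_rec:
  assumes "t < c"
  shows "A (Suc m) (Suc c) (Suc t) + A m (Suc c) (Suc (Suc t))
       = A (Suc m) (Suc c) (Suc (Suc t)) + A m c t + 2 * A m (Suc c) (Suc t)"
proof -
  have h1: "(\<Sum>s\<in>{Suc t..<Suc c}. A m c s) = A m c (Suc t) + (\<Sum>s\<in>{Suc (Suc t)..<Suc c}. A m c s)"
    by (rule sum_head) (use assms in simp)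
  have h2: "(\<Sum>s\<in>{Suc t..<Suc c}. A m (Suc c) s) = A m (Suc c) (Suc t) + (\<Sum>s\<in>{Suc (Suc t)..<Suc c}. A m (Suc c) s)"
    by (rule sum_head) (use assms in simp)
  show ?thesis using A_rec[of m c t] A_rec[of m c "Suc t"] h1 h2 by simp
qed

lemma perm_top: "A m m m = 1"
proof (induction m)
  case 0 then show ?case by (simp add: A_000)
next
  case (Suc m) then show ?case using perm_rec[of m m] A_big[of "Suc m" "Suc (Suc m)"] by simp
qed

lemma x_top: "A (Suc (Suc q)) (Suc q) (Suc q) = Suc q"
proof (induction q)
  case 0
  have "A (Suc 0) 0 0 = 0" by (simp add: A_S0)
  then show ?case using A_rec[of "Suc 0" 0 0] perm_top[of "Suc 0"] by simp
next
  case (Suc q)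
  then show ?case using A_rec[of "Suc (Suc q)" "Suc q" "Suc q"] perm_top[of "Suc (Suc q)"] by simp
qed

definition bal :: "nat \<Rightarrow> nat \<Rightarrow> int" where
  "bal m j = int ((m+j) choose m) - int ((m+j) choose Suc m)"

lemma bal_rec: "bal (Suc k) (Suc j) = bal (Suc k) j + bal k (Suc j)"
proof -
  define K where "K = k + Suc j"
  have e: "Suc k + Suc j = Suc K" "Suc k + j = K" "k + Suc j = K" by (simp_all add: K_def)
  show ?thesis unfolding bal_def e binomial_Suc_Suc of_nat_add by simp
qed

lemma bal_diag: "bal (Suc k) (Suc k) = bal (Suc k) k"
proof -
  define n where "n = Suc k + k"
  have e: "Suc k + Suc k = Suc n" "Suc k + k = n" by (simp_all add: n_def)
  have s: "n choose k = n choose Suc k"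
    using binomial_symmetric[of k n] by (simp add: n_def)
  show ?thesis unfolding bal_def e binomial_Suc_Suc of_nat_add s by simp
qed

lemma perm_closed: "j < m \<Longrightarrow> int (A m m (m - j)) = bal m j"
proof (induction m arbitrary: j)
  case 0 then show ?case by simp
next
  case (Suc k)
  note outer = Suc.IH
  show ?case using Suc.prems
  proof (induction j)
    case 0
    show ?case using perm_top[of "Suc k"] by (simp add: bal_def)
  next
    case (Suc j')
    then have jk: "j' < k" by simp
    have inner: "int (A (Suc k) (Suc k) (Suc k - j')) = bal (Suc k) j'" using Suc.IH jk by simp
    define t' where "t' = k - Suc j'"
    have e1: "Suc k - Suc j' = Suc t'" "Suc k - j' = Suc (Suc t')" using jk by (simp_all add: t'_def)
    have rec: "A (Suc k) (Suc k) (Suc t') = A k k t' + A (Suc k) (Suc k) (Suc (Suc t'))"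
      by (rule perm_rec)
    have low: "int (A k k t') = bal k (Suc j')"
    proof (cases "Suc j' < k")
      case True
      then show ?thesis using outer[of "Suc j'"] by (simp add: t'_def)
    next
      case False
      then have kj: "k = Suc j'" using jk by simp
      then have "t' = 0" by (simp add: t'_def)
      then have "A k k t' = A k k (k - j')" using kj A_zero[of k j'] by simp
      then have "int (A k k t') = bal k j'" using outer[of j'] jk by simp
      then show ?thesis using kj bal_diag[of j'] by simp
    qed
    have "int (A (Suc k) (Suc k) (Suc k - Suc j')) = bal k (Suc j') + bal (Suc k) j'"
      using rec low inner e1 by simp
    then show ?case using bal_rec[of k j'] by simp
  qed
qed

definition clx :: "nat \<Rightarrow> nat \<Rightarrow> int" where
  "clx q j = - int ((Suc q + j) choose q) + 2 * (int q + 1 - int j) * int ((Suc q + j) choose Suc q)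
     + (int q + 3 - int j) * int ((Suc q + j) choose Suc (Suc q)) + 2 * int ((Suc q + j) choose Suc (Suc (Suc q)))"

lemma clx_K: "Suc q + j = K \<Longrightarrow> clx q j = - int (K choose q) + 2 * (int q + 1 - int j) * int (K choose Suc q)
     + (int q + 3 - int j) * int (K choose Suc (Suc q)) + 2 * int (K choose Suc (Suc (Suc q)))"
  unfolding clx_def by simp_all

lemma bal_K: "m + j = K \<Longrightarrow> bal m j = int (K choose m) - int (K choose Suc m)"
  unfolding bal_def by simp

lemma I1: "clx (Suc Q) (Suc j) + bal (Suc (Suc Q)) j = clx (Suc Q) j + clx Q (Suc j) + 2 * bal (Suc (Suc Q)) (Suc j)"
proof -
  define K where "K = Q + j + 2"
  have a: "clx (Suc Q) (Suc j) = - int (Suc K choose Suc Q) + 2 * (int (Suc Q) + 1 - int (Suc j)) * int (Suc K choose Suc (Suc Q))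
     + (int (Suc Q) + 3 - int (Suc j)) * int (Suc K choose Suc (Suc (Suc Q))) + 2 * int (Suc K choose Suc (Suc (Suc (Suc Q))))"
    by (rule clx_K) (simp add: K_def)
  have b: "clx (Suc Q) j = - int (K choose Suc Q) + 2 * (int (Suc Q) + 1 - int j) * int (K choose Suc (Suc Q))
     + (int (Suc Q) + 3 - int j) * int (K choose Suc (Suc (Suc Q))) + 2 * int (K choose Suc (Suc (Suc (Suc Q))))"
    by (rule clx_K) (simp add: K_def)
  have c: "clx Q (Suc j) = - int (K choose Q) + 2 * (int Q + 1 - int (Suc j)) * int (K choose Suc Q)
     + (int Q + 3 - int (Suc j)) * int (K choose Suc (Suc Q)) + 2 * int (K choose Suc (Suc (Suc Q)))"
    by (rule clx_K) (simp add: K_def)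
  have d: "bal (Suc (Suc Q)) j = int (K choose Suc (Suc Q)) - int (K choose Suc (Suc (Suc Q)))"
    by (rule bal_K) (simp add: K_def)
  have e: "bal (Suc (Suc Q)) (Suc j) = int (Suc K choose Suc (Suc Q)) - int (Suc K choose Suc (Suc (Suc Q)))"
    by (rule bal_K) (simp add: K_def)
  show ?thesis
    unfolding a b c d e binomial_Suc_Suc of_nat_add of_nat_Suc
    by (simp add: algebra_simps)
qed

lemma I2: "clx Q (Suc Q) = clx Q Q"
proof (cases Q)
  case 0 then show ?thesis by (simp add: clx_def)
next
  case (Suc r)
  define n where "n = Suc Q + Q"
  have a: "clx Q (Suc Q) = - int (Suc n choose Q) + 2 * (int Q + 1 - int (Suc Q)) * int (Suc n choose Suc Q)
     + (int Q + 3 - int (Suc Q)) * int (Suc n choose Suc (Suc Q)) + 2 * int (Suc n choose Suc (Suc (Suc Q)))"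
    by (rule clx_K) (simp add: n_def)
  have b: "clx Q Q = - int (n choose Q) + 2 * (int Q + 1 - int Q) * int (n choose Suc Q)
     + (int Q + 3 - int Q) * int (n choose Suc (Suc Q)) + 2 * int (n choose Suc (Suc (Suc Q)))"
    by (rule clx_K) (simp add: n_def)
  have pas: "Suc n choose Q = (n choose r) + (n choose Q)"
    using Suc by simp
  have rn: "r \<le> n" and nr: "n - r = Suc (Suc Q)" using Suc by (simp_all add: n_def)
  have s: "n choose r = n choose Suc (Suc Q)"
    using binomial_symmetric[OF rn] nr by simp
  have qn: "Q \<le> n" and nq: "n - Q = Suc Q" by (simp_all add: n_def)
  have s2: "n choose Q = n choose Suc Q"
    using binomial_symmetric[OF qn] nq by simp
  show ?thesis
    unfolding a b pas binomial_Suc_Suc s s2 of_nat_add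
    by (simp add: algebra_simps)
qed

lemma clx_0: "clx q 0 = int (Suc q)"
proof -
  have eq: "clx q 0 = - int (Suc q choose q) + 2 * (int q + 1 - int 0) * int (Suc q choose Suc q)
     + (int q + 3 - int 0) * int (Suc q choose Suc (Suc q)) + 2 * int (Suc q choose Suc (Suc (Suc q)))"
    by (rule clx_K) simp
  have c: "Suc q choose q = Suc q" "Suc q choose Suc q = 1" "Suc q choose Suc (Suc q) = 0"
      "Suc q choose Suc (Suc (Suc q)) = 0"
    by (simp_all only: binomial_Suc_n binomial_n_n) (simp_all add: binomial_eq_0)
  show ?thesis unfolding eq c by simp
qed

lemma x_closed: "j \<le> q \<Longrightarrow> int (A (Suc (Suc q)) (Suc q) (Suc q - j)) = clx q j"
proof (induction q arbitrary: j)
  case 0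
  then show ?case using x_top[of 0] clx_0[of 0] by simp
next
  case (Suc Q)
  note outer = Suc.IH
  show ?case using Suc.prems
  proof (induction j)
    case 0
    show ?case using x_top[of "Suc Q"] clx_0[of "Suc Q"] by simp
  next
    case (Suc j')
    then have jQ: "j' \<le> Q" by simp
    have inner: "int (A (Suc (Suc (Suc Q))) (Suc (Suc Q)) (Suc (Suc Q) - j')) = clx (Suc Q) j'"
      using Suc.IH jQ by simp
    define t' where "t' = Q - j'"
    have e1: "Suc (Suc Q) - Suc j' = Suc t'" "Suc (Suc Q) - j' = Suc (Suc t')" using jQ by (simp_all add: t'_def)
    have loc: "A (Suc (Suc (Suc Q))) (Suc (Suc Q)) (Suc t') + A (Suc (Suc Q)) (Suc (Suc Q)) (Suc (Suc t'))
       = A (Suc (Suc (Suc Q))) (Suc (Suc Q)) (Suc (Suc t')) + A (Suc (Suc Q)) (Suc Q) t' + 2 * A (Suc (Suc Q)) (Suc (Suc Q)) (Suc t')"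
      by (rule loc_rec) (simp add: t'_def)
    have p1: "int (A (Suc (Suc Q)) (Suc (Suc Q)) (Suc (Suc t'))) = bal (Suc (Suc Q)) j'"
      using perm_closed[of j' "Suc (Suc Q)"] jQ e1 by simp
    have p2: "int (A (Suc (Suc Q)) (Suc (Suc Q)) (Suc t')) = bal (Suc (Suc Q)) (Suc j')"
      using perm_closed[of "Suc j'" "Suc (Suc Q)"] jQ e1 by simp
    have low: "int (A (Suc (Suc Q)) (Suc Q) t') = clx Q (Suc j')"
    proof (cases "j' < Q")
      case True
      then have "t' = Suc Q - Suc j'" by (simp add: t'_def)
      then show ?thesis using outer[of "Suc j'"] True by simp
    next
      case False
      then have jq: "j' = Q" using jQ by simp
      then have "t' = 0" by (simp add: t'_def)
      then have "A (Suc (Suc Q)) (Suc Q) t' = A (Suc (Suc Q)) (Suc Q) (Suc Q - Q)"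
        using A_zero[of "Suc (Suc Q)" Q] by simp
      then have "int (A (Suc (Suc Q)) (Suc Q) t') = clx Q Q" using outer[of Q] by simp
      then show ?thesis using jq I2[of Q] by simp
    qed
    have "int (A (Suc (Suc (Suc Q))) (Suc (Suc Q)) (Suc t')) =
        clx (Suc Q) j' + clx Q (Suc j') + 2 * bal (Suc (Suc Q)) (Suc j') - bal (Suc (Suc Q)) j'"
    proof -
      have "int (A (Suc (Suc (Suc Q))) (Suc (Suc Q)) (Suc t')) + int (A (Suc (Suc Q)) (Suc (Suc Q)) (Suc (Suc t')))
         = int (A (Suc (Suc (Suc Q))) (Suc (Suc Q)) (Suc (Suc t'))) + int (A (Suc (Suc Q)) (Suc Q) t') + 2 * int (A (Suc (Suc Q)) (Suc (Suc Q)) (Suc t'))"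
        using arg_cong[OF loc, of int] by simp
      then show ?thesis using inner e1 p1 p2 low by simp
    qed
    then show ?case using I1[of Q j'] e1 by simp
  qed
qed

lemma binom_ratio: "int (Suc k) * int (n choose Suc k) = (int n - int k) * int (n choose k)"
proof -
  have "Suc k * (Suc n choose Suc k) = Suc n * (n choose k)" by (rule Suc_times_binomial)
  then have "int (Suc k) * (int (n choose k) + int (n choose Suc k)) = int (Suc n) * int (n choose k)"
    by (metis binomial_Suc_Suc of_nat_add of_nat_mult)
  then show ?thesis by (simp add: algebra_simps)
qed

lemma final_int:
  "(int q + 2) * (int q + 3) * clx q q = 6 * (int q + 1)^2 * int ((Suc q + q) choose Suc q)"
proof -
  define n where "n = Suc q + q"
  define B where "B = int (n choose Suc q)"
  define X where "X = int (n choose Suc (Suc q))"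
  define Y where "Y = int (n choose Suc (Suc (Suc q)))"
  have eq: "clx q q = - int (n choose q) + 2 * (int q + 1 - int q) * B
     + (int q + 3 - int q) * X + 2 * Y"
    unfolding B_def X_def Y_def by (rule clx_K) (simp add: n_def)
  have qn: "q \<le> n" and nq: "n - q = Suc q" by (simp_all add: n_def)
  have s: "n choose q = n choose Suc q"
    using binomial_symmetric[OF qn] nq by simp
  have h1: "(int q + 2) * X = int q * B"
    using binom_ratio[of "Suc q" n] unfolding X_def B_def by (simp add: n_def algebra_simps)
  have h2: "(int q + 3) * Y = (int q - 1) * X"
    using binom_ratio[of "Suc (Suc q)" n] unfolding X_def Y_def by (simp add: n_def algebra_simps)
  have c: "clx q q = B + 3 * X + 2 * Y" using eq s B_def by simp
  have "(int q + 2) * (int q + 3) * clx q q = 6 * (int q + 1)^2 * B"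
  proof -
    have Xt: "3 * (int q + 3) * ((int q + 2) * X) = 3 * (int q + 3) * (int q * B)" by (simp only: h1)
    have "2 * (int q + 2) * ((int q + 3) * Y) = 2 * (int q - 1) * ((int q + 2) * X)"
      by (simp only: h2) (simp add: algebra_simps)
    also have "\<dots> = 2 * (int q - 1) * (int q * B)" by (simp only: h1)
    finally have Yt: "2 * (int q + 2) * ((int q + 3) * Y) = 2 * (int q - 1) * (int q * B)" .
    have "(int q + 2) * (int q + 3) * clx q q = (int q + 2) * (int q + 3) * B
       + 3 * (int q + 3) * ((int q + 2) * X) + 2 * (int q + 2) * ((int q + 3) * Y)"
      unfolding c by (simp add: algebra_simps)
    also have "\<dots> = (int q + 2) * (int q + 3) * B + 3 * (int q + 3) * (int q * B) + 2 * (int q - 1) * (int q * B)"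
      by (simp only: Xt Yt)
    also have "\<dots> = 6 * (int q + 1)^2 * B"
      by (simp add: algebra_simps power2_eq_square)
    finally show ?thesis .
  qed
  then show ?thesis by (simp add: B_def n_def)
qed

theorem theorem4:
  fixes n :: nat
  assumes "n \<ge> 1"
  shows "real (op_count n (n - 1) [1, 2, 3]) =
           3 * (real n - 1)^2 * real ((2*n - 2) choose (n - 1)) / (real n * (real n + 1))"
proof (cases "n = 1")
  case True
  then show ?thesis using op_count_A[of n "n - 1"] A_S0[of 0 0] by simp
next
  case False
  then have n2: "n \<ge> 2" using assms by simp
  define q where "q = n - 2"
  have n: "n = Suc (Suc q)" using n2 by (simp add: q_def)
  have "op_count n (n - 1) [1,2,3] = A (Suc (Suc q)) (Suc q) 0" using op_count_A[of n "n - 1"] n by simp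
  also have "\<dots> = A (Suc (Suc q)) (Suc q) (Suc q - q)" using A_zero[of "Suc (Suc q)" q] by simp
  finally have oc: "int (op_count n (n - 1) [1,2,3]) = clx q q" using x_closed[of q q] by simp
  have bin: "(2*n - 2) choose (n - 1) = 2 * ((Suc q + q) choose Suc q)"
  proof -
    define m where "m = Suc q + q"
    have e: "2*n - 2 = Suc m" "n - 1 = Suc q" by (simp_all add: n m_def)
    have qm: "q \<le> m" and mq: "m - q = Suc q" by (simp_all add: m_def)
    have sym: "m choose q = m choose Suc q"
      using binomial_symmetric[OF qm] mq by simp
    have "(2*n - 2) choose (n - 1) = (m choose q) + (m choose Suc q)"
      unfolding e by (rule binomial_Suc_Suc)
    then show ?thesis using sym by (simp add: m_def)
  qed
  have fi: "(real q + 2) * (real q + 3) * real_of_int (clx q q) = 6 * (real q + 1)^2 * real ((Suc q + q) choose Suc q)"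
    using arg_cong[OF final_int[of q], of real_of_int] by simp
  define R where "R = real ((Suc q + q) choose Suc q)"
  define Cq where "Cq = real_of_int (clx q q)"
  have fi': "(real q + 2) * (real q + 3) * Cq = 6 * (real q + 1)^2 * R"
    using fi unfolding R_def Cq_def .
  have nz: "(real q + 2) * (real q + 3) \<noteq> 0" by simp
  have br: "real ((2*n - 2) choose (n - 1)) = 2 * R"
    unfolding bin R_def by simp
  have "real (op_count n (n - 1) [1,2,3]) = Cq"
    using arg_cong[OF oc, of real_of_int] unfolding Cq_def by simp
  also have "\<dots> = 6 * (real q + 1)^2 * R / ((real q + 2) * (real q + 3))"
    using fi' nz by (simp add: field_simps)
  also have "\<dots> = 3 * (real n - 1)^2 * real ((2*n - 2) choose (n - 1)) / (real n * (real n + 1))"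
    unfolding br by (simp add: n field_simps)
  finally show ?thesis .
qed

end
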